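(* Let $G$ be a median graph, let $p,q$ be vertices of $G$, and let $k$ be the largest dimension of a cube subgraph of the subgraph $G(I(p,q))$ induced by $I(p,q)$. Then (i) for every vertex $v\in I(p,q)$ and any $m$ distinct neighbors $y_1,\dots,y_m$ of $v$ lying in $I(v,q)$, there is an $m$-dimensional cube subgraph of $G$ contained in $I(v,q)$ and containing $v,y_1,\dots,y_m$; and (ii) $G(I(p,q))$ admits an isometric embedding into the $k$-dimensional grid $\mathbb Z^k=\prod_{i=1}^k P_i$ (Cartesian product of $k$ two-way infinite paths, with its graph metric).
   Context: A median graph is a connected graph in which for every three vertices $u,v,w$ the set $I(u,v)\cap I(v,w)\cap I(w,u)$ consists of a single vertex, where $I(a,b)=\{z:d_G(a,z)+d_G(z,b)=d_G(a,b)\}$ and $d_G$ is the graph distance. $G(S)$ denotes the subgraph induced by a vertex set $S$. An $m$-dimensional cube subgraph is a subgraph isomorphic to the hypercube graph $Q_m$. An isometric embedding of graphs is a map $f$ with $d(f(a),f(b))=d_G(a,b)$ for all vertices $a,b$. *)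

theory Defs
  imports Main
begin

definition simple_graph :: "'a set \<Rightarrow> ('a \<Rightarrow> 'a \<Rightarrow> bool) \<Rightarrow> bool" where
  "simple_graph V E \<longleftrightarrow> (\<forall>x y. E x y \<longrightarrow> x \<in> V \<and> y \<in> V) \<and>
      (\<forall>x y. E x y \<longrightarrow> E y x) \<and> (\<forall>x. \<not> E x x)"

definition walk :: "'a set \<Rightarrow> ('a \<Rightarrow> 'a \<Rightarrow> bool) \<Rightarrow> 'a list \<Rightarrow> bool" where
  "walk V E xs \<longleftrightarrow> xs \<noteq> [] \<and> set xs \<subseteq> V \<and> successively E xs"

definition connected_graph :: "'a set \<Rightarrow> ('a \<Rightarrow> 'a \<Rightarrow> bool) \<Rightarrow> bool" where
  "connected_graph V E \<longleftrightarrow>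
     (\<forall>a\<in>V. \<forall>b\<in>V. \<exists>xs. walk V E xs \<and> hd xs = a \<and> last xs = b)"

definition gdist :: "'a set \<Rightarrow> ('a \<Rightarrow> 'a \<Rightarrow> bool) \<Rightarrow> 'a \<Rightarrow> 'a \<Rightarrow> nat" where
  "gdist V E a b = (LEAST n. \<exists>xs. walk V E xs \<and> hd xs = a \<and> last xs = b \<and> length xs = Suc n)"

definition interval :: "'a set \<Rightarrow> ('a \<Rightarrow> 'a \<Rightarrow> bool) \<Rightarrow> 'a \<Rightarrow> 'a \<Rightarrow> 'a set" where
  "interval V E a b = {z \<in> V. gdist V E a z + gdist V E z b = gdist V E a b}"

definition median_graph :: "'a set \<Rightarrow> ('a \<Rightarrow> 'a \<Rightarrow> bool) \<Rightarrow> bool" where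
  "median_graph V E \<longleftrightarrow> simple_graph V E \<and> connected_graph V E \<and>
     (\<forall>u\<in>V. \<forall>v\<in>V. \<forall>w\<in>V. \<exists>!x. x \<in> interval V E u v \<inter> interval V E v w \<inter> interval V E w u)"

definition induced_adj :: "('a \<Rightarrow> 'a \<Rightarrow> bool) \<Rightarrow> 'a set \<Rightarrow> 'a \<Rightarrow> 'a \<Rightarrow> bool" where
  "induced_adj E S x y \<longleftrightarrow> E x y \<and> x \<in> S \<and> y \<in> S"

text \<open>Hypercube Q_m: vertices are the subsets of {0..<m}, adjacent iff they differ in one element.\<close>
definition cube_verts :: "nat \<Rightarrow> nat set set" where
  "cube_verts m = Pow {..<m}"

definition cube_adj :: "nat set \<Rightarrow> nat set \<Rightarrow> bool" where
  "cube_adj A B \<longleftrightarrow> card ((A - B) \<union> (B - A)) = 1"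

text \<open>f is an isomorphism from Q_m onto a subgraph of (V,E) whose vertex set lies in S.
  (A subgraph isomorphic to Q_m is exactly the image of such an f.)\<close>
definition cube_subgraph_map :: "'a set \<Rightarrow> ('a \<Rightarrow> 'a \<Rightarrow> bool) \<Rightarrow> nat \<Rightarrow> (nat set \<Rightarrow> 'a) \<Rightarrow> bool" where
  "cube_subgraph_map V E m f \<longleftrightarrow> inj_on f (cube_verts m) \<and> f ` cube_verts m \<subseteq> V \<and>
     (\<forall>A\<in>cube_verts m. \<forall>B\<in>cube_verts m. cube_adj A B \<longrightarrow> E (f A) (f B))"

definition has_cube :: "'a set \<Rightarrow> ('a \<Rightarrow> 'a \<Rightarrow> bool) \<Rightarrow> nat \<Rightarrow> bool" where
  "has_cube V E m \<longleftrightarrow> (\<exists>f. cube_subgraph_map V E m f)"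

text \<open>The k-dimensional grid Z^k (Cartesian product of k two-way infinite paths):
  vertices are integer vectors (functions nat => int vanishing outside {0..<k}),
  adjacent iff they differ in exactly one coordinate, by exactly 1.\<close>
definition grid_verts :: "nat \<Rightarrow> (nat \<Rightarrow> int) set" where
  "grid_verts k = {x. \<forall>i\<ge>k. x i = 0}"

definition grid_adj :: "nat \<Rightarrow> (nat \<Rightarrow> int) \<Rightarrow> (nat \<Rightarrow> int) \<Rightarrow> bool" where
  "grid_adj k x y \<longleftrightarrow> x \<in> grid_verts k \<and> y \<in> grid_verts k \<and>
     (\<exists>i<k. \<bar>x i - y i\<bar> = 1 \<and> (\<forall>j. j \<noteq> i \<longrightarrow> x j = y j))"

definition isometric_embedding ::
  "'a set \<Rightarrow> ('a \<Rightarrow> 'a \<Rightarrow> bool) \<Rightarrow> 'b set \<Rightarrow> ('b \<Rightarrow> 'b \<Rightarrow> bool) \<Rightarrow> ('a \<Rightarrow> 'b) \<Rightarrow> bool" where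
  "isometric_embedding V E W F f \<longleftrightarrow> f ` V \<subseteq> W \<and>
     (\<forall>a\<in>V. \<forall>b\<in>V. gdist W F (f a) (f b) = gdist V E a b)"

end

theory Submission
  imports Defs
begin

lemma walk_single[simp]: "walk W F [x] \<longleftrightarrow> x \<in> W" by (simp add: walk_def)
lemma walk_Cons2[simp]: "walk W F (x # y # xs) \<longleftrightarrow> x \<in> W \<and> F x y \<and> walk W F (y # xs)"
  by (auto simp: walk_def)

lemma gdist_less:
  assumes "walk W F xs" "hd xs = a" "last xs = b"
  shows "gdist W F a b < length xs"
proof -
  have ne: "xs \<noteq> []" using assms(1) by (simp add: walk_def)
  then have "\<exists>ys. walk W F ys \<and> hd ys = a \<and> last ys = b \<and> length ys = Suc (length xs - 1)"
    using assms by (intro exI[of _ xs]) auto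
  then have "gdist W F a b \<le> length xs - 1" unfolding gdist_def by (rule Least_le)
  with ne show ?thesis by (cases xs) auto
qed

lemma gdist_ex:
  assumes "walk W F xs" "hd xs = a" "last xs = b"
  shows "\<exists>ys. walk W F ys \<and> hd ys = a \<and> last ys = b \<and> length ys = Suc (gdist W F a b)"
proof -
  have ne: "xs \<noteq> []" using assms(1) by (simp add: walk_def)
  then have "\<exists>n ys. walk W F ys \<and> hd ys = a \<and> last ys = b \<and> length ys = Suc n"
    using assms by (intro exI[of _ "length xs - 1"] exI[of _ xs]) auto
  then show ?thesis unfolding gdist_def by (rule LeastI_ex)
qed

lemma gdist_char:
  assumes zW: "z \<in> W"
    and a: "\<And>x y. F x y \<Longrightarrow> \<delta> x \<le> Suc (\<delta> y)"
    and b: "\<And>x. x \<in> W \<Longrightarrow> \<delta> x \<noteq> 0 \<Longrightarrow> \<exists>y\<in>W. F x y \<and> \<delta> x = Suc (\<delta> y)"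
    and c: "\<And>x. x \<in> W \<Longrightarrow> \<delta> x = 0 \<Longrightarrow> x = z"
    and dz: "\<delta> z = 0"
    and xW: "x \<in> W"
  shows "gdist W F x z = \<delta> x"
proof -
  have low: "\<delta> x < length (x#ys)" if "walk W F (x#ys)" "last (x#ys) = z" for ys x
    using that
  proof (induction ys arbitrary: x)
    case Nil then show ?case using dz by simp
  next
    case (Cons y ys)
    then have "F x y" "walk W F (y#ys)" "last (y#ys) = z" by auto
    then have "\<delta> y < length (y#ys)" using Cons.IH by blast
    with a[OF \<open>F x y\<close>] show ?case by simp
  qed
  have up: "\<exists>ys. walk W F ys \<and> hd ys = x \<and> last ys = z \<and> length ys = Suc n"
    if "x \<in> W" "\<delta> x = n" for n x
    using that
  proof (induction n arbitrary: x)
    case 0 then have "x = z" using c by auto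
    then show ?case using 0 by (intro exI[of _ "[x]"]) auto
  next
    case (Suc n)
    then obtain y where y: "y \<in> W" "F x y" "\<delta> x = Suc (\<delta> y)" using b by fastforce
    then obtain ys where ys: "walk W F ys" "hd ys = y" "last ys = z" "length ys = Suc n"
      using Suc by auto
    then obtain r where "ys = y # r" by (cases ys) auto
    then show ?case using ys y Suc.prems by (intro exI[of _ "x#ys"]) auto
  qed
  obtain ys where ys: "walk W F ys" "hd ys = x" "last ys = z" "length ys = Suc (\<delta> x)"
    using up[OF xW refl] by blast
  have le: "gdist W F x z \<le> \<delta> x" using gdist_less[OF ys(1-3)] ys(4) by simp
  obtain zs where zs: "walk W F zs" "hd zs = x" "last zs = z" "length zs = Suc (gdist W F x z)"
    using gdist_ex[OF ys(1-3)] by blast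
  then obtain r where "zs = x # r" by (cases zs) (auto simp: walk_def)
  then have "\<delta> x < length zs" using low[of x r] zs by simp
  with le zs(4) show ?thesis by simp
qed


locale mg =
  fixes V :: "'a set" and E :: "'a \<Rightarrow> 'a \<Rightarrow> bool"
  assumes mg: "median_graph V E"
begin

abbreviation "d \<equiv> gdist V E"
abbreviation "Itv \<equiv> interval V E"

lemma sg: "simple_graph V E" using mg by (simp add: median_graph_def)
lemma EV: "E a b \<Longrightarrow> a \<in> V \<and> b \<in> V" using sg by (simp add: simple_graph_def)
lemma Esym: "E a b \<Longrightarrow> E b a" using sg by (simp add: simple_graph_def)
lemma Eirr: "\<not> E a a" using sg by (simp add: simple_graph_def)

lemma conn: "a \<in> V \<Longrightarrow> b \<in> V \<Longrightarrow> \<exists>xs. walk V E xs \<and> hd xs = a \<and> last xs = b"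
  using mg by (simp add: median_graph_def connected_graph_def)

lemma d_ex: "a \<in> V \<Longrightarrow> b \<in> V \<Longrightarrow>
   \<exists>ys. walk V E ys \<and> hd ys = a \<and> last ys = b \<and> length ys = Suc (d a b)"
  using conn gdist_ex by metis

lemma d_refl[simp]: "a \<in> V \<Longrightarrow> d a a = 0"
  using gdist_less[of V E "[a]" a a] by simp

lemma d_zero: assumes "a \<in> V" "b \<in> V" "d a b = 0" shows "a = b"
proof -
  obtain ys where "walk V E ys" "hd ys = a" "last ys = b" "length ys = Suc 0"
    using d_ex assms by force
  then show ?thesis by (cases ys) auto
qed

lemma d_edge: assumes "E a b" "c \<in> V" shows "d a c \<le> Suc (d b c)"
proof -
  obtain ys where ys: "walk V E ys" "hd ys = b" "last ys = c" "length ys = Suc (d b c)"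
    using d_ex assms EV by blast
  then obtain r where r: "ys = b # r" by (cases ys) (auto simp: walk_def)
  have "walk V E (a # ys)" using ys r assms EV by auto
  then have "d a c < length (a#ys)" using gdist_less[of V E "a#ys" a c] ys r by auto
  then show ?thesis using ys by simp
qed

lemma d_step: assumes "a \<in> V" "b \<in> V" "d a b = Suc n" shows "\<exists>c. E a c \<and> d c b = n"
proof -
  obtain ys where ys: "walk V E ys" "hd ys = a" "last ys = b" "length ys = Suc (Suc n)"
    using d_ex assms by force
  then obtain c r where r: "ys = a # c # r" by (cases ys; cases "tl ys") auto
  then have "E a c" "walk V E (c#r)" using ys by auto
  then have "d c b < length (c#r)" using gdist_less[of V E "c#r" c b] ys r by auto
  then have "d c b \<le> n" using ys r by simp
  moreover have "Suc n \<le> Suc (d c b)" using d_edge[OF \<open>E a c\<close> assms(2)] assms by simp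
  ultimately show ?thesis using \<open>E a c\<close> by auto
qed

lemma d_tri: assumes "a \<in> V" "b \<in> V" "c \<in> V" shows "d a c \<le> d a b + d b c"
  using assms
proof (induction "d a b" arbitrary: a)
  case 0 then show ?case using d_zero by fastforce
next
  case (Suc n)
  then obtain a' where "E a a'" "d a' b = n" using d_step by metis
  then have "d a' c \<le> d a' b + d b c" using Suc EV by auto
  then show ?case using d_edge[OF \<open>E a a'\<close> \<open>c\<in>V\<close>] \<open>d a' b = n\<close> Suc.hyps by simp
qed

lemma d_adj_le: "E a b \<Longrightarrow> d a b \<le> 1"
  using d_edge[of a b b] EV by fastforce

lemma d_adj: "E a b \<Longrightarrow> d a b = 1"
  using d_adj_le[of a b] d_zero[of a b] EV Eirr by fastforce

lemma d_sym_le: assumes "a \<in> V" "b \<in> V" shows "d b a \<le> d a b"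
  using assms
proof (induction "d a b" arbitrary: a)
  case 0 then show ?case using d_zero by fastforce
next
  case (Suc n)
  then obtain c where c: "E a c" "d c b = n" using d_step by metis
  then have "d b c \<le> n" using Suc EV by auto
  moreover have "d b a \<le> d b c + d c a" using d_tri Suc EV c by blast
  moreover have "d c a \<le> 1" using d_adj_le Esym c by blast
  ultimately show ?case using Suc.hyps by simp
qed

lemma d_sym: "a \<in> V \<Longrightarrow> b \<in> V \<Longrightarrow> d a b = d b a"
  using d_sym_le by (simp add: antisym)

lemma d_one: assumes "a \<in> V" "b \<in> V" "d a b = 1" shows "E a b"
proof -
  obtain ys where ys: "walk V E ys" "hd ys = a" "last ys = b" "length ys = Suc 1"
    using d_ex assms by force
  then obtain c r where r: "ys = a # c # r" by (cases ys; cases "tl ys") auto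
  then show ?thesis using ys by auto
qed

lemma d_edge2: assumes "E a b" "c \<in> V" shows "d c a \<le> Suc (d c b)"
  using d_edge[OF assms] d_sym assms EV by simp

lemma itv_def': "Itv a b = {z\<in>V. d a z + d z b = d a b}" by (simp add: interval_def)

lemma itv_V: "Itv a b \<subseteq> V" by (auto simp: interval_def)

lemma itv_sym: "a \<in> V \<Longrightarrow> b \<in> V \<Longrightarrow> Itv a b = Itv b a"
  by (auto simp: interval_def d_sym)

lemma itv_left: "a \<in> V \<Longrightarrow> b \<in> V \<Longrightarrow> a \<in> Itv a b"
  by (simp add: interval_def)
lemma itv_right: "a \<in> V \<Longrightarrow> b \<in> V \<Longrightarrow> b \<in> Itv a b"
  by (simp add: interval_def)

lemma itv_tr: assumes "u \<in> V" "w \<in> V" "a \<in> Itv u w" "b \<in> Itv a w"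
  shows "b \<in> Itv u w" "a \<in> Itv u b"
proof -
  have V: "a \<in> V" "b \<in> V" using assms itv_V by auto
  have 1: "d u a + d a w = d u w" "d a b + d b w = d a w" using assms by (auto simp: interval_def)
  have "d u b \<le> d u a + d a b" "d u w \<le> d u b + d b w" using d_tri V assms by auto
  then show "b \<in> Itv u w" "a \<in> Itv u b" using 1 V by (auto simp: interval_def)
qed

lemma med_ex: assumes "a \<in> V" "b \<in> V" "c \<in> V"
  shows "\<exists>m. m \<in> Itv a b \<and> m \<in> Itv b c \<and> m \<in> Itv c a"
  using mg assms unfolding median_graph_def by blast

lemma med_uniq: assumes "a \<in> V" "b \<in> V" "c \<in> V"
  "m \<in> Itv a b" "m \<in> Itv b c" "m \<in> Itv c a"
  "m' \<in> Itv a b" "m' \<in> Itv b c" "m' \<in> Itv c a"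
  shows "m = m'"
proof -
  have "\<exists>!x. x \<in> Itv a b \<inter> Itv b c \<inter> Itv c a" using mg assms unfolding median_graph_def by blast
  then show ?thesis using assms by blast
qed

lemma bip: assumes "E a b" "c \<in> V" shows "d c a \<noteq> d c b"
proof
  assume eq: "d c a = d c b"
  have V: "a \<in> V" "b \<in> V" using EV assms by auto
  obtain m where m: "m \<in> Itv a b" "m \<in> Itv b c" "m \<in> Itv c a" using med_ex V assms by blast
  have "d a m + d m b = 1" using m d_adj assms by (auto simp: interval_def)
  then have "d a m = 0 \<or> d m b = 0" by arith
  then have "m = a \<or> m = b" using d_zero m itv_V V by blast
  then show False
  proof
    assume "m = a" then have "d b a + d a c = d b c" using m by (simp add: interval_def)
    then show False using eq d_adj[OF Esym[OF assms(1)]] d_sym V assms by simp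
  next
    assume "m = b" then have "d c b + d b a = d c a" using m by (simp add: interval_def)
    then show False using eq d_adj[OF Esym[OF assms(1)]] by simp
  qed
qed

lemma bip2: assumes "E a b" "c \<in> V" shows "d c b = Suc (d c a) \<or> d c a = Suc (d c b)"
  using bip[OF assms] d_edge2[OF assms] d_edge2[OF Esym[OF assms(1)] assms(2)] by arith

end

context mg
begin

definition Wh :: "'a \<Rightarrow> 'a \<Rightarrow> 'a set" where "Wh a b = {x \<in> V. d x a < d x b}"
definition HS :: "'a set set" where "HS = {Wh b a | a b. E a b}"
definition Spl :: "'a \<Rightarrow> 'a \<Rightarrow> 'a set set" where "Spl x y = {H \<in> HS. x \<notin> H \<and> y \<in> H}"

lemma Wcompl: assumes "E a b" shows "Wh b a = V - Wh a b"
  using bip[OF assms] unfolding Wh_def by (auto, metis nat_neq_iff)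

lemma HS_V: "H \<in> HS \<Longrightarrow> H \<subseteq> V" by (auto simp: HS_def Wh_def)

lemma HS_I: "E a b \<Longrightarrow> Wh b a \<in> HS" by (auto simp: HS_def)

lemma HS_compl: assumes "H \<in> HS" shows "V - H \<in> HS"
proof -
  obtain a b where "E a b" "H = Wh b a" using assms by (auto simp: HS_def)
  then have "V - H = Wh a b" using Wcompl[OF \<open>E a b\<close>] by (auto simp: Wh_def)
  then show ?thesis using HS_I[OF Esym[OF \<open>E a b\<close>]] by simp
qed

lemma sq_sub:
  assumes e: "E u1 u2" "E v1 v2" "E u1 v1" "E u2 v2" and dd: "d u1 v2 = 2" "d u2 v1 = 2"
  shows "Wh u1 v1 \<subseteq> Wh u2 v2"
proof
  fix z assume z: "z \<in> Wh u1 v1"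
  have V: "u1 \<in> V" "u2 \<in> V" "v1 \<in> V" "v2 \<in> V" "z \<in> V" using e EV z by (auto simp: Wh_def)
  show "z \<in> Wh u2 v2"
  proof (rule ccontr)
    assume nz: "z \<notin> Wh u2 v2"
    have 1: "d z v1 = Suc (d z u1)" using bip2[OF e(3) V(5)] z by (auto simp: Wh_def)
    have 2: "d z u2 = Suc (d z v2)" using bip2[OF e(4) V(5)] nz V by (auto simp: Wh_def)
    have 3: "d z u2 \<le> Suc (d z u1)" using d_edge2[OF Esym[OF e(1)] V(5)] .
    have 4: "d z v1 \<le> Suc (d z v2)" using d_edge2[OF e(2) V(5)] .
    have t: "d z v2 = d z u1" using 1 2 3 4 by simp
    have a1: "d u1 u2 = 1" "d u1 v1 = 1" "d v2 v1 = 1" "d v2 u2 = 1"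
      using d_adj e Esym by auto
    have sy: "d u2 u1 = 1" "d v1 u1 = 1" "d u1 z = d z u1" "d v1 z = d z v1" "d u2 v2 = 1"
      "d v1 v2 = 1" "d v2 z = d z v2"
      using a1 d_sym V by auto
    have "u1 \<in> Itv u2 v1" "u1 \<in> Itv v1 z" "u1 \<in> Itv z u2"
      unfolding interval_def using V a1 dd 1 2 t sy by simp_all
    moreover have "v2 \<in> Itv u2 v1" "v2 \<in> Itv v1 z" "v2 \<in> Itv z u2"
      unfolding interval_def using V a1 dd 1 2 t sy by simp_all
    ultimately have "u1 = v2" using med_uniq[of u2 v1 z] V by blast
    then show False using dd V by simp
  qed
qed

lemma sq_eq:
  assumes e: "E u1 u2" "E v1 v2" "E u1 v1" "E u2 v2" and dd: "d u1 v2 = 2" "d u2 v1 = 2"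
  shows "Wh u1 v1 = Wh u2 v2"
  using sq_sub[OF assms] sq_sub[OF Esym[OF e(1)] Esym[OF e(2)] e(4) e(3) dd(2) dd(1)] by blast

lemma theta_k:
  assumes "E a b" "E x x'" "x \<in> Wh a b" "x' \<in> Wh b a" "d x a = k"
  shows "Wh x x' = Wh a b"
  using assms
proof (induction k arbitrary: a b x x')
  case 0
  have V: "a \<in> V" "b \<in> V" "x \<in> V" "x' \<in> V" using 0 EV by auto
  then have xa: "x = a" using d_zero 0 by blast
  have "d x' a = 1" using d_adj[OF Esym[OF 0(2)]] xa by simp
  then have "d x' b = 0" using 0(4) by (simp add: Wh_def)
  then have "x' = b" using d_zero V by blast
  then show ?case using xa by simp
next
  case (Suc k)
  have V: "a \<in> V" "b \<in> V" "x \<in> V" "x' \<in> V" using Suc.prems EV by auto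
  have dab: "d a b = 1" "d b a = 1" using d_adj Suc.prems(1) Esym by auto
  have xb: "d x b = Suc (Suc k)" using bip2[OF Suc.prems(1) V(3)] Suc.prems by (auto simp: Wh_def)
  have x'a: "d x' a = Suc (d x' b)" using bip2[OF Suc.prems(1) V(4)] Suc.prems by (auto simp: Wh_def)
  have "d x a \<le> Suc (d x' a)" "d x b \<le> Suc (d x' b)" "d x' a \<le> Suc (d x a)"
    using d_edge[OF Suc.prems(2)] d_edge[OF Esym[OF Suc.prems(2)]] V by auto
  then have x'd: "d x' a = Suc (Suc k)" "d x' b = Suc k" using x'a xb Suc.prems(5) by auto
  obtain x1 where x1: "E x x1" "d x1 a = k" using d_step V Suc.prems(5) by blast
  have V1: "x1 \<in> V" using EV x1 by auto
  have "d x b \<le> Suc (d x1 b)" using d_edge[OF x1(1) V(2)] .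
  moreover have "d x1 b \<le> d x1 a + d a b" using d_tri V V1 by blast
  ultimately have x1b: "d x1 b = Suc k" using xb x1 dab by simp
  have nE: "\<not> E x1 x'"
  proof
    assume "E x1 x'" then show False using bip[OF \<open>E x1 x'\<close> V(2)] x1b x'd d_sym V V1 by simp
  qed
  have "d x1 x' \<le> d x1 x + d x x'" using d_tri V V1 by blast
  moreover have "d x1 x = 1" "d x x' = 1" using d_adj x1 Esym Suc.prems(2) by auto
  moreover have "d x1 x' \<noteq> 0"
  proof
    assume "d x1 x' = 0" then have "x1 = x'" using d_zero V1 V(4) by blast
    then show False using x1 x'd by simp
  qed
  moreover have "d x1 x' \<noteq> 1" using d_one[OF V1 V(4)] nE by auto
  ultimately have dx1x': "d x1 x' = 2" by simp
  obtain w where w: "w \<in> Itv x1 x'" "w \<in> Itv x' b" "w \<in> Itv b x1" using med_ex V V1 by blast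
  have Vw: "w \<in> V" using w itv_V by auto
  have w1: "d x1 w + d w x' = 2" "d x' w + d w b = Suc k" "d b w + d w x1 = Suc k"
    using w dx1x' x'd x1b d_sym V V1 by (auto simp: interval_def)
  have w2: "d x1 w = 1" "d x' w = 1" "d w b = k" using w1 d_sym Vw V V1 by auto
  have Ew: "E x1 w" "E x' w" using d_one w2 Vw V V1 by auto
  have "d w a \<le> Suc (d x1 a)" "d x' a \<le> Suc (d w a)"
    using d_edge[OF Esym[OF Ew(1)] V(1)] d_edge[OF Ew(2) V(1)] by auto
  then have wa: "d w a = Suc k" using x1 x'd by simp
  have x1W: "x1 \<in> Wh a b" using x1 x1b V1 by (simp add: Wh_def)
  have wW: "w \<in> Wh b a" using wa w2 Vw by (simp add: Wh_def)
  have IH: "Wh x1 w = Wh a b" using Suc.IH[OF Suc.prems(1) Ew(1) x1W wW x1(2)] .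
  have "d x w \<le> d x x1 + d x1 w" using d_tri V V1 Vw by blast
  moreover have "d x x1 = 1" using d_adj x1 by auto
  moreover have "d x b \<le> d x w + d w b" using d_tri V Vw by blast
  ultimately have dxw: "d x w = 2" using w2 xb by simp
  have "Wh x x' = Wh x1 w"
    using sq_eq[OF x1(1) Ew(2) Suc.prems(2) Ew(1) dxw dx1x'] .
  then show ?case using IH by simp
qed

lemma theta:
  assumes "E a b" "E x x'" "x \<in> Wh a b" "x' \<in> Wh b a"
  shows "Wh x x' = Wh a b"
  using theta_k[OF assms refl] .

lemma Spl_count:
  assumes "x \<in> V" "y \<in> V" shows "finite (Spl x y) \<and> card (Spl x y) = d x y"
  using assms
proof (induction "d x y" arbitrary: x)
  case 0
  then have "x = y" using d_zero by auto
  then have "Spl x y = {}" by (auto simp: Spl_def)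
  then show ?case using 0 by simp
next
  case (Suc n)
  obtain x' where x': "E x x'" "d x' y = n" using d_step Suc by metis
  have V': "x' \<in> V" using EV x' by auto
  have IH: "finite (Spl x' y)" "card (Spl x' y) = n" using Suc.hyps(1)[of x'] x' V' Suc by auto
  have yW: "y \<in> Wh x' x" using x' Suc d_sym V' by (simp add: Wh_def)
  have xnW: "x \<notin> Wh x' x" using d_adj[OF x'(1)] Suc.prems by (simp add: Wh_def)
  have x'W: "x' \<in> Wh x' x" using d_adj[OF Esym[OF x'(1)]] V' by (simp add: Wh_def)
  have eq: "Spl x y = insert (Wh x' x) (Spl x' y)"
  proof (intro equalityI subsetI)
    fix H assume H: "H \<in> Spl x y"
    then obtain a b where ab: "E a b" "H = Wh b a" "x \<notin> H" "y \<in> H" by (auto simp: Spl_def HS_def)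
    show "H \<in> insert (Wh x' x) (Spl x' y)"
    proof (cases "x' \<in> H")
      case True
      have "x \<in> Wh a b" using ab Wcompl[OF ab(1)] Suc.prems by auto
      then have "Wh x x' = Wh a b" using theta[OF ab(1) x'(1)] True ab by auto
      then have "H = Wh x' x" using ab Wcompl[OF ab(1)] Wcompl[OF x'(1)] by simp
      then show ?thesis by simp
    next
      case False then show ?thesis using H by (auto simp: Spl_def)
    qed
  next
    fix H assume H: "H \<in> insert (Wh x' x) (Spl x' y)"
    show "H \<in> Spl x y"
    proof (cases "H = Wh x' x")
      case True then show ?thesis using HS_I[OF x'(1)] yW xnW by (simp add: Spl_def)
    next
      case False
      then have H': "H \<in> Spl x' y" using H by simp
      then obtain a b where ab: "E a b" "H = Wh b a" "x' \<notin> H" "y \<in> H" by (auto simp: Spl_def HS_def)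
      have "x \<notin> H"
      proof
        assume "x \<in> H"
        have "x' \<in> Wh a b" using ab Wcompl[OF ab(1)] V' by auto
        then have "Wh x' x = Wh a b" using theta[OF ab(1) Esym[OF x'(1)]] \<open>x \<in> H\<close> ab by auto
        then have "y \<notin> Wh x' x" using ab Wcompl[OF ab(1)] by auto
        then show False using yW by simp
      qed
      then show ?thesis using H' by (auto simp: Spl_def)
    qed
  qed
  have "Wh x' x \<notin> Spl x' y" using x'W by (auto simp: Spl_def)
  then show ?case using eq IH Suc.hyps(2) by simp
qed

lemma Spl_fin: "x \<in> V \<Longrightarrow> y \<in> V \<Longrightarrow> finite (Spl x y)" using Spl_count by blast
lemma Spl_card: "x \<in> V \<Longrightarrow> y \<in> V \<Longrightarrow> card (Spl x y) = d x y" using Spl_count by blast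

lemma Spl_decomp:
  assumes "x \<in> V" "y \<in> V" "z \<in> Itv x y"
  shows "Spl x y = Spl x z \<union> Spl z y" "Spl x z \<inter> Spl z y = {}"
proof -
  have zV: "z \<in> V" using assms itv_V by auto
  have sub: "Spl x y \<subseteq> Spl x z \<union> Spl z y" by (auto simp: Spl_def)
  have f: "finite (Spl x z)" "finite (Spl z y)" "finite (Spl x y)" using Spl_fin assms zV by auto
  have c: "card (Spl x z) + card (Spl z y) = card (Spl x y)"
    using Spl_card assms zV by (auto simp: interval_def)
  have m1: "card (Spl x y) \<le> card (Spl x z \<union> Spl z y)" using card_mono[OF _ sub] f by auto
  have m2: "card (Spl x z \<union> Spl z y) + card (Spl x z \<inter> Spl z y) = card (Spl x z) + card (Spl z y)"
    using card_Un_Int f by metis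
  have m3: "card (Spl x z \<union> Spl z y) \<le> card (Spl x z) + card (Spl z y)" using card_Un_le by blast
  have c0: "card (Spl x z \<inter> Spl z y) = 0" using m1 m2 c by linarith
  have c1: "card (Spl x y) = card (Spl x z \<union> Spl z y)" using m1 m3 c by linarith
  show "Spl x z \<inter> Spl z y = {}" using c0 f by simp
  show "Spl x y = Spl x z \<union> Spl z y" using card_subset_eq[OF _ sub c1] f by simp
qed

lemma Spl_sub1: "x \<in> V \<Longrightarrow> y \<in> V \<Longrightarrow> z \<in> Itv x y \<Longrightarrow> Spl x z \<subseteq> Spl x y"
  using Spl_decomp by blast
lemma Spl_sub2: "x \<in> V \<Longrightarrow> y \<in> V \<Longrightarrow> z \<in> Itv x y \<Longrightarrow> Spl z y \<subseteq> Spl x y"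
  using Spl_decomp by blast

lemma Spl_self: "x \<in> V \<Longrightarrow> Spl x x = {}" by (auto simp: Spl_def)

lemma Spl_dist:
  assumes "p \<in> V" "x \<in> V" "y \<in> V"
  shows "d x y = card ((Spl p x - Spl p y) \<union> (Spl p y - Spl p x))"
proof -
  obtain m where m: "m \<in> Itv p x" "m \<in> Itv x y" "m \<in> Itv y p" using med_ex assms by blast
  have mV: "m \<in> V" using m itv_V by auto
  have m3: "m \<in> Itv p y" using m itv_sym assms by auto
  have A: "Spl p x = Spl p m \<union> Spl m x" "Spl p m \<inter> Spl m x = {}" using Spl_decomp[OF assms(1,2) m(1)] by auto
  have B: "Spl p y = Spl p m \<union> Spl m y" "Spl p m \<inter> Spl m y = {}" using Spl_decomp[OF assms(1,3) m3] by auto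
  have C: "Spl m x \<inter> Spl m y = {}"
  proof (rule ccontr)
    assume "Spl m x \<inter> Spl m y \<noteq> {}"
    then obtain H where H: "H \<in> HS" "m \<notin> H" "x \<in> H" "y \<in> H" by (auto simp: Spl_def)
    have "V - H \<in> Spl x m" using HS_compl[OF H(1)] H mV by (auto simp: Spl_def)
    then have "V - H \<in> Spl x y" using Spl_sub1[OF assms(2,3) m(2)] by auto
    then show False using H by (auto simp: Spl_def)
  qed
  have "(Spl p x - Spl p y) \<union> (Spl p y - Spl p x) = Spl m x \<union> Spl m y" using A B C by blast
  moreover have "card (Spl m x \<union> Spl m y) = d m x + d m y"
    using card_Un_disjoint[OF Spl_fin Spl_fin C] mV assms Spl_card by auto
  moreover have "d x m + d m y = d x y" using m by (auto simp: interval_def)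
  ultimately show ?thesis using d_sym mV assms by simp
qed

lemma Spl_inj: "p \<in> V \<Longrightarrow> x \<in> V \<Longrightarrow> y \<in> V \<Longrightarrow> Spl p x = Spl p y \<Longrightarrow> x = y"
  using Spl_dist[of p x y] d_zero by simp

end

context mg
begin

lemma join:
  assumes pq: "p \<in> V" "q \<in> V" and xy: "x \<in> Itv p q" "y \<in> Itv p q"
  shows "\<exists>j\<in>Itv p q. Spl p j = Spl p x \<union> Spl p y"
proof -
  have V: "x \<in> V" "y \<in> V" using xy itv_V by auto
  obtain j where j: "j \<in> Itv x y" "j \<in> Itv y q" "j \<in> Itv q x" using med_ex V pq by blast
  have jV: "j \<in> V" using j itv_V by auto
  have jx: "j \<in> Itv x q" using j itv_sym V pq by auto
  have 1: "j \<in> Itv p q" "x \<in> Itv p j" using itv_tr[OF pq xy(1) jx] by auto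
  have 2: "y \<in> Itv p j" using itv_tr[OF pq xy(2) j(2)] by auto
  have "Spl p x \<subseteq> Spl p j" "Spl p y \<subseteq> Spl p j"
    using Spl_sub1[OF pq(1) jV 1(2)] Spl_sub1[OF pq(1) jV 2] by auto
  moreover have "Spl p j \<subseteq> Spl p x \<union> Spl p y"
  proof
    fix H assume H: "H \<in> Spl p j"
    show "H \<in> Spl p x \<union> Spl p y"
    proof (rule ccontr)
      assume "H \<notin> Spl p x \<union> Spl p y"
      then have "x \<notin> H" "y \<notin> H" using H by (auto simp: Spl_def)
      then have "H \<in> Spl x j" using H by (auto simp: Spl_def)
      then have "H \<in> Spl x y" using Spl_sub1[OF V j(1)] by auto
      then show False using \<open>y \<notin> H\<close> by (auto simp: Spl_def)
    qed
  qed
  ultimately show ?thesis using 1 by blast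
qed

lemma realize:
  assumes pq: "p \<in> V" "q \<in> V" and fin: "finite S" and xs: "\<forall>i\<in>S. xs i \<in> Itv p q"
  shows "\<exists>z\<in>Itv p q. Spl p z = (\<Union>i\<in>S. Spl p (xs i))"
  using fin xs
proof (induction S rule: finite_induct)
  case empty
  then show ?case using itv_left[OF pq] Spl_self[OF pq(1)] by auto
next
  case (insert i S)
  then obtain z where z: "z \<in> Itv p q" "Spl p z = (\<Union>i\<in>S. Spl p (xs i))" by auto
  obtain j where "j \<in> Itv p q" "Spl p j = Spl p z \<union> Spl p (xs i)"
    using join[OF pq z(1), of "xs i"] insert.prems by blast
  then show ?case using z by (intro bexI[of _ j]) auto
qed

lemma cube_lemma:
  assumes vq: "v \<in> V" "q \<in> V" and inj: "inj_on y {..<m}"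
    and yy: "\<forall>i<m. E v (y i) \<and> y i \<in> Itv v q"
  shows "\<exists>f. cube_subgraph_map V E m f \<and> f ` cube_verts m \<subseteq> Itv v q \<and>
                 v \<in> f ` cube_verts m \<and> (\<forall>i<m. y i \<in> f ` cube_verts m)"
proof -
  define f where "f S = (SOME z. z \<in> Itv v q \<and> Spl v z = (\<Union>i\<in>S. Spl v (y i)))" for S
  have fS: "f S \<in> Itv v q \<and> Spl v (f S) = (\<Union>i\<in>S. Spl v (y i))" if "S \<subseteq> {..<m}" for S
  proof -
    have "finite S" using that finite_subset by blast
    then have "\<exists>z. z \<in> Itv v q \<and> Spl v z = (\<Union>i\<in>S. Spl v (y i))"
      using realize[OF vq, of S y] yy that by auto
    then show ?thesis unfolding f_def by (rule someI_ex)
  qed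
  have yV: "y i \<in> V" if "i < m" for i using yy that EV by blast
  have c1: "card (Spl v (y i)) = 1" if "i < m" for i
    using Spl_card[OF vq(1) yV[OF that]] d_adj yy that by auto
  define h where "h i = the_elem (Spl v (y i))" for i
  have hS: "Spl v (y i) = {h i}" if "i < m" for i
    using c1[OF that] unfolding h_def by (metis card_1_singletonE the_elem_eq)
  have hinj: "inj_on h {..<m}"
  proof
    fix i j assume "i \<in> {..<m}" "j \<in> {..<m}" "h i = h j"
    then have "Spl v (y i) = Spl v (y j)" using hS by auto
    then have "y i = y j" using Spl_inj vq yV \<open>i \<in> {..<m}\<close> \<open>j \<in> {..<m}\<close> by auto
    then show "i = j" using inj \<open>i \<in> {..<m}\<close> \<open>j \<in> {..<m}\<close> by (auto dest: inj_onD)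
  qed
  have fh: "Spl v (f S) = h ` S" if "S \<subseteq> {..<m}" for S
    using fS[OF that] hS that by auto
  have fI: "f S \<in> Itv v q" if "S \<subseteq> {..<m}" for S using fS[OF that] by simp
  have fV: "f S \<in> V" if "S \<subseteq> {..<m}" for S using fI[OF that] itv_V by auto
  have "inj_on f (cube_verts m)"
  proof
    fix A B assume AB: "A \<in> cube_verts m" "B \<in> cube_verts m" "f A = f B"
    then have "h ` A = h ` B" using fh[of A] fh[of B] by (auto simp: cube_verts_def)
    then show "A = B" using inj_on_image_eq_iff[OF hinj] AB by (auto simp: cube_verts_def)
  qed
  moreover have "E (f A) (f B)" if AB: "A \<in> cube_verts m" "B \<in> cube_verts m" "cube_adj A B" for A B
  proof -
    have sub: "A \<subseteq> {..<m}" "B \<subseteq> {..<m}" using AB by (auto simp: cube_verts_def)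
    have e1: "h ` (A - B) = h ` A - h ` B" using inj_on_image_set_diff[OF hinj, of A B] sub by blast
    have e2: "h ` (B - A) = h ` B - h ` A" using inj_on_image_set_diff[OF hinj, of B A] sub by blast
    have "(h ` A - h ` B) \<union> (h ` B - h ` A) = h ` ((A - B) \<union> (B - A))"
      by (simp add: image_Un e1 e2)
    moreover have "card (h ` ((A - B) \<union> (B - A))) = card ((A - B) \<union> (B - A))"
      by (rule card_image[OF inj_on_subset[OF hinj]]) (use sub in blast)
    ultimately have "d (f A) (f B) = 1"
      using Spl_dist[OF vq(1) fV[OF sub(1)] fV[OF sub(2)]] fh sub AB(3) by (simp add: cube_adj_def)
    then show ?thesis using d_one[OF fV[OF sub(1)] fV[OF sub(2)]] by simp
  qed
  moreover have "f ` cube_verts m \<subseteq> Itv v q" using fI by (auto simp: cube_verts_def)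
  moreover have "f {} = v"
    using Spl_inj[OF vq(1) fV[of "{}"] vq(1)] fh[of "{}"] Spl_self[OF vq(1)] by auto
  moreover have "y i = f {i}" if "i < m" for i
    using Spl_inj[OF vq(1) fV[of "{i}"] yV[OF that]] fh[of "{i}"] hS[OF that] that by auto
  ultimately show ?thesis
    unfolding cube_subgraph_map_def using fV
    by (intro exI[of _ f]) (auto simp: cube_verts_def intro!: image_eqI)
qed

end

definition antichain :: "('b \<Rightarrow> 'b \<Rightarrow> bool) \<Rightarrow> 'b set \<Rightarrow> bool" where
  "antichain le A \<longleftrightarrow> (\<forall>x\<in>A. \<forall>y\<in>A. le x y \<longrightarrow> x = y)"

definition porder :: "('b \<Rightarrow> 'b \<Rightarrow> bool) \<Rightarrow> 'b set \<Rightarrow> bool" where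
  "porder le P \<longleftrightarrow> (\<forall>x\<in>P. le x x) \<and> (\<forall>x\<in>P. \<forall>y\<in>P. \<forall>z\<in>P. le x y \<longrightarrow> le y z \<longrightarrow> le x z)
     \<and> (\<forall>x\<in>P. \<forall>y\<in>P. le x y \<longrightarrow> le y x \<longrightarrow> x = y)"

lemma porder_sub: "porder le P \<Longrightarrow> Q \<subseteq> P \<Longrightarrow> porder le Q"
  unfolding porder_def by blast

lemma antichain_sub: "antichain le A \<Longrightarrow> B \<subseteq> A \<Longrightarrow> antichain le B"
  unfolding antichain_def by blast

lemma maximal_ex:
  assumes "finite S" "S \<noteq> {}" "porder le S"
  shows "\<exists>m\<in>S. \<forall>z\<in>S. le m z \<longrightarrow> z = m"
proof -
  define f where "f z = card {y\<in>S. le y z}" for z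
  obtain s where "s \<in> S" using assms by auto
  have "\<forall>z. z \<in> S \<longrightarrow> f z < Suc (card S)"
    unfolding f_def using assms(1) by (auto intro!: le_imp_less_Suc card_mono)
  then obtain m where m: "m \<in> S" "\<forall>z. z \<in> S \<longrightarrow> f z \<le> f m"
    using ex_has_greatest_nat[of "\<lambda>z. z \<in> S", OF \<open>s \<in> S\<close>] by blast
  have "\<forall>z\<in>S. le m z \<longrightarrow> z = m"
  proof (intro ballI impI)
    fix z assume z: "z \<in> S" "le m z"
    show "z = m"
    proof (rule ccontr)
      assume ne: "z \<noteq> m"
      have "{y\<in>S. le y m} \<subset> {y\<in>S. le y z}"
      proof
        show "{y\<in>S. le y m} \<subseteq> {y\<in>S. le y z}" using assms(3) z m unfolding porder_def by blast
        have "z \<notin> {y\<in>S. le y m}" using assms(3) z m ne unfolding porder_def by blast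
        moreover have "z \<in> {y\<in>S. le y z}" using assms(3) z unfolding porder_def by blast
        ultimately show "{y\<in>S. le y m} \<noteq> {y\<in>S. le y z}" by blast
      qed
      then have "f m < f z" unfolding f_def using assms(1) by (simp add: psubset_card_mono)
      then show False using m z by force
    qed
  qed
  then show ?thesis using m by blast
qed

lemma dilworth:
  assumes "finite P" "porder le P"
    and "\<forall>A\<subseteq>P. antichain le A \<longrightarrow> card A \<le> w"
  shows "\<exists>col. (\<forall>x\<in>P. col x < w) \<and> (\<forall>x\<in>P. \<forall>y\<in>P. col x = col y \<longrightarrow> le x y \<or> le y x)"
  using assms
proof (induction P arbitrary: w rule: finite_psubset_induct)
  case (psubset P)
  note po = psubset.prems(1)
  have refl: "\<And>x. x \<in> P \<Longrightarrow> le x x" using po unfolding porder_def by blast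
  have trans: "\<And>x y z. x \<in> P \<Longrightarrow> y \<in> P \<Longrightarrow> z \<in> P \<Longrightarrow> le x y \<Longrightarrow> le y z \<Longrightarrow> le x z"
    using po unfolding porder_def by blast
  have anti: "\<And>x y. x \<in> P \<Longrightarrow> y \<in> P \<Longrightarrow> le x y \<Longrightarrow> le y x \<Longrightarrow> x = y"
    using po unfolding porder_def by blast
  show ?case
  proof (cases "P = {}")
    case True then show ?thesis by auto
  next
    case False
    obtain a where a: "a \<in> P" "\<forall>z\<in>P. le a z \<longrightarrow> z = a"
      using maximal_ex[OF psubset.hyps(1) False po] by blast
    define P' where "P' = P - {a}"
    have P'sub: "P' \<subset> P" using a P'_def by auto
    have finP': "finite P'" using psubset.hyps(1) P'_def by auto
    have "antichain le {a}" unfolding antichain_def by auto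
    then have "card {a} \<le> w" using psubset.prems(2) a by auto
    then obtain w0 where w0: "w = Suc w0" by (cases w) auto
    show ?thesis
    proof (cases "\<forall>B\<subseteq>P'. antichain le B \<longrightarrow> card B \<le> w0")
      case True
      obtain col' where col': "\<forall>x\<in>P'. col' x < w0" "\<forall>x\<in>P'. \<forall>y\<in>P'. col' x = col' y \<longrightarrow> le x y \<or> le y x"
        using psubset.IH[OF P'sub porder_sub[OF po] True] P'sub by blast
      define col where "col = col'(a := w0)"
      have "\<forall>x\<in>P. col x < w"
      proof
        fix x assume "x \<in> P"
        show "col x < w"
        proof (cases "x = a")
          case True then show ?thesis using w0 col_def by simp
        next
          case False
          then have "x \<in> P'" using \<open>x \<in> P\<close> P'_def by simp
          then have "col' x < w0" using col'(1) by blast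
          then show ?thesis using w0 col_def False by simp
        qed
      qed
      moreover have "\<forall>x\<in>P. \<forall>y\<in>P. col x = col y \<longrightarrow> le x y \<or> le y x"
      proof (intro ballI impI)
        fix x y assume xy: "x \<in> P" "y \<in> P" "col x = col y"
        show "le x y \<or> le y x"
        proof (cases "x = a \<or> y = a")
          case True
          have "x = a \<and> y = a"
          proof (rule ccontr)
            assume nb: "\<not> (x = a \<and> y = a)"
            have "\<exists>u\<in>P'. col u = w0"
            proof (cases "x = a")
              case True
              then have "y \<noteq> a" "col y = w0" using nb xy col_def by auto
              then show ?thesis using xy P'_def by auto
            next
              case False
              then have "y = a" "col x = w0" using \<open>x = a \<or> y = a\<close> xy col_def by auto
              then show ?thesis using xy False P'_def by auto
            qed
            then obtain u where u: "u \<in> P'" "col u = w0" by blast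
            then have "col' u = w0" using P'_def col_def by auto
            then show False using bspec[OF col'(1) u(1)] by simp
          qed
          then show ?thesis using refl a by auto
        next
          case False then show ?thesis using xy col' col_def P'_def by auto
        qed
      qed
      ultimately show ?thesis by blast
    next
      case False
      then obtain B0 where B0: "B0 \<subseteq> P'" "antichain le B0" "\<not> card B0 \<le> w0" by blast
      have "card B0 \<le> w" using psubset.prems(2) B0 P'_def by auto
      then have cB0: "card B0 = w" using B0 w0 by simp
      have bP': "\<forall>A\<subseteq>P'. antichain le A \<longrightarrow> card A \<le> w" using psubset.prems(2) P'_def by auto
      obtain col' where col': "\<forall>x\<in>P'. col' x < w" "\<forall>x\<in>P'. \<forall>y\<in>P'. col' x = col' y \<longrightarrow> le x y \<or> le y x"
        using psubset.IH[OF P'sub porder_sub[OF po] bP'] P'sub by blast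
      define M where "M = {B. B \<subseteq> P' \<and> antichain le B \<and> card B = w}"
      have F1: "\<exists>y\<in>B. col' y = i" if B: "B \<in> M" "i < w" for B i
      proof -
        have Bs: "B \<subseteq> P'" "antichain le B" "card B = w" using B M_def by auto
        have finB: "finite B" using Bs finP' finite_subset by blast
        have inj: "inj_on col' B"
        proof
          fix x y assume "x \<in> B" "y \<in> B" "col' x = col' y"
          then show "x = y" using col'(2) Bs unfolding antichain_def by blast
        qed
        have "col' ` B \<subseteq> {..<w}" using col' Bs by auto
        moreover have "card (col' ` B) = card {..<w}" using card_image[OF inj] Bs by simp
        ultimately have "col' ` B = {..<w}" using card_subset_eq by (metis finite_lessThan)
        then have "i \<in> col' ` B" using B(2) by simp
        then show ?thesis by force
      qed
      define Z where "Z i = {z\<in>P'. col' z = i \<and> (\<exists>B\<in>M. z \<in> B)}" for i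
      have B0M: "B0 \<in> M" using B0 cB0 M_def by auto
      have "\<exists>m. m \<in> Z i \<and> (\<forall>z\<in>Z i. le z m)" if i: "i < w" for i
      proof -
        obtain y where "y \<in> B0" "col' y = i" using F1[OF B0M i] by blast
        then have ne: "Z i \<noteq> {}" using B0 B0M Z_def by auto
        have ZP: "Z i \<subseteq> P'" using Z_def by auto
        obtain m where m: "m \<in> Z i" "\<forall>z\<in>Z i. le m z \<longrightarrow> z = m"
          using maximal_ex[OF finite_subset[OF ZP finP'] ne porder_sub[OF po]] ZP P'_def by blast
        have "\<forall>z\<in>Z i. le z m"
        proof
          fix z assume z: "z \<in> Z i"
          then have "col' z = col' m" using m Z_def by auto
          then have "le z m \<or> le m z" using col'(2) z m ZP by blast
          then show "le z m" using m z refl ZP P'_def by blast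
        qed
        then show ?thesis using m by blast
      qed
      then have "\<forall>i. \<exists>m. i < w \<longrightarrow> m \<in> Z i \<and> (\<forall>z\<in>Z i. le z m)" by blast
      then have "\<exists>x. \<forall>i. i < w \<longrightarrow> x i \<in> Z i \<and> (\<forall>z\<in>Z i. le z (x i))" by (rule choice)
      then obtain x where x0: "\<forall>i. i < w \<longrightarrow> x i \<in> Z i \<and> (\<forall>z\<in>Z i. le z (x i))" by (rule exE)
      have x: "\<And>i. i < w \<Longrightarrow> x i \<in> Z i \<and> (\<forall>z\<in>Z i. le z (x i))" using x0 by blast
      have xP': "x i \<in> P'" "col' (x i) = i" if "i < w" for i using x[OF that] Z_def by auto
      have xanti: "le (x i) (x j) \<Longrightarrow> i < w \<Longrightarrow> j < w \<Longrightarrow> i = j" for i j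
      proof (rule ccontr)
        assume h: "le (x i) (x j)" "i < w" "j < w" "i \<noteq> j"
        obtain B where B: "B \<in> M" "x j \<in> B" using x[OF h(3)] Z_def by auto
        obtain y where y: "y \<in> B" "col' y = i" using F1[OF B(1) h(2)] by blast
        have BP: "B \<subseteq> P'" "antichain le B" using B M_def by auto
        have "y \<in> Z i" using y B BP Z_def by auto
        then have "le y (x i)" using x[OF h(2)] by blast
        then have "le y (x j)" using trans h(1) xP' BP y h P'_def by blast
        then have "y = x j" using BP y B unfolding antichain_def by blast
        then show False using y xP'[OF h(3)] h by simp
      qed
      define X where "X = x ` {..<w}"
      have injx: "inj_on x {..<w}"
      proof (rule inj_onI)
        fix i j assume ij: "i \<in> {..<w}" "j \<in> {..<w}" "x i = x j"
        have ci: "col' (x i) = i" using xP'(2) ij(1) by simp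
        have cj: "col' (x j) = j" using xP'(2) ij(2) by simp
        show "i = j" using ci cj ij(3) by metis
      qed
      have cX: "card X = w" using card_image[OF injx] X_def by simp
      have XP': "X \<subseteq> P'" using xP' X_def by auto
      have aX: "a \<notin> X" using XP' P'_def by auto
      have "card (insert a X) = Suc w" using cX aX finite_subset[OF XP' finP'] by simp
      moreover have iaP: "insert a X \<subseteq> P" using XP' a P'_def by auto
      ultimately have "\<not> antichain le (insert a X)"
      proof -
        assume c: "card (insert a X) = Suc w" and s: "insert a X \<subseteq> P"
        show ?thesis
        proof
          assume "antichain le (insert a X)"
          then have "card (insert a X) \<le> w" using psubset.prems(2) s by blast
          then show False using c by simp
        qed
      qed
      then obtain u v where uv: "u \<in> insert a X" "v \<in> insert a X" "le u v" "u \<noteq> v"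
        unfolding antichain_def by blast
      have "\<exists>i<w. le (x i) a"
      proof -
        have "\<not> (u \<in> X \<and> v \<in> X)"
        proof
          assume "u \<in> X \<and> v \<in> X"
          then obtain i j where ij: "i<w" "j<w" "u = x i" "v = x j" unfolding X_def by auto
          then have "i = j" using xanti[of i j] uv(3) by simp
          then show False using ij uv(4) by simp
        qed
        then consider "u = a" "v \<in> X" | "v = a" "u \<in> X" using uv by auto
        then show ?thesis
        proof cases
          case 1
          have "v \<in> P" using 1 XP' P'_def by auto
          then have "v = a" using a(2) uv(3) 1(1) by auto
          then show ?thesis using uv(4) 1(1) by simp
        next
          case 2
          then obtain i where "i < w" "u = x i" unfolding X_def by auto
          then show ?thesis using uv(3) 2(1) by blast
        qed
      qed
      then obtain i where i: "i < w" "le (x i) a" by blast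
      define K where "K = insert a {z\<in>P'. col' z = i \<and> le z (x i)}"
      define P'' where "P'' = P - K"
      have P''sub: "P'' \<subset> P" using P''_def K_def a by auto
      have bP'': "\<forall>B\<subseteq>P''. antichain le B \<longrightarrow> card B \<le> w0"
      proof (intro allI impI)
        fix B assume B: "B \<subseteq> P''" "antichain le B"
        have "card B \<le> w" using psubset.prems(2) B P''_def by auto
        moreover have "card B \<noteq> w"
        proof
          assume "card B = w"
          then have "B \<in> M" using B M_def P''_def K_def P'_def by auto
          then obtain y where y: "y \<in> B" "col' y = i" using F1 i by blast
          then have "y \<in> Z i" using \<open>B \<in> M\<close> M_def Z_def by auto
          then have "le y (x i)" using x[OF i(1)] by blast
          then have "y \<in> K" using y \<open>B \<in> M\<close> M_def K_def by auto
          then show False using y B P''_def by auto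
        qed
        ultimately show "card B \<le> w0" using w0 by simp
      qed
      obtain col'' where col'': "\<forall>x\<in>P''. col'' x < w0" "\<forall>x\<in>P''. \<forall>y\<in>P''. col'' x = col'' y \<longrightarrow> le x y \<or> le y x"
        using psubset.IH[OF P''sub porder_sub[OF po] bP''] P''sub by blast
      define col where "col z = (if z \<in> K then w0 else col'' z)" for z
      have "\<forall>z\<in>P. col z < w"
      proof
        fix z assume z: "z \<in> P"
        show "col z < w"
        proof (cases "z \<in> K")
          case True then show ?thesis using w0 col_def by simp
        next
          case False
          then have "z \<in> P''" using z P''_def by simp
          then have "col'' z < w0" using col''(1) by blast
          then show ?thesis using w0 col_def False by simp
        qed
      qed
      moreover have "\<forall>u\<in>P. \<forall>v\<in>P. col u = col v \<longrightarrow> le u v \<or> le v u"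
      proof (intro ballI impI)
        fix u v assume uv: "u \<in> P" "v \<in> P" "col u = col v"
        have Kle: "le z a" if "z \<in> K" for z
        proof (cases "z = a")
          case True then show ?thesis using refl a by simp
        next
          case False
          then have "z \<in> P'" "le z (x i)" using that K_def by auto
          then show ?thesis using trans[of z "x i" a] xP'[OF i(1)] i a P'_def by auto
        qed
        show "le u v \<or> le v u"
        proof (cases "u \<in> K")
          case uK: True
          have vK: "v \<in> K"
          proof (rule ccontr)
            assume "v \<notin> K"
            then have "v \<in> P''" "col v = col'' v" using uv P''_def col_def by auto
            then have "col v < w0" using bspec[OF col''(1), of v] by simp
            then show False using uv uK col_def by simp
          qed
          show ?thesis
          proof (cases "u = a \<or> v = a")
            case True then show ?thesis using Kle uK vK by auto
          next
            case False
            then have "u \<in> P'" "v \<in> P'" "col' u = i" "col' v = i" using uK vK K_def by auto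
            then show ?thesis using col'(2) by auto
          qed
        next
          case uK: False
          have vK: "v \<notin> K"
          proof
            assume "v \<in> K"
            have "u \<in> P''" "col u = col'' u" using uv P''_def col_def uK by auto
            then have "col u < w0" using bspec[OF col''(1), of u] by simp
            then show False using uv \<open>v \<in> K\<close> col_def by simp
          qed
          then show ?thesis using uK uv col_def col'' P''_def by auto
        qed
      qed
      ultimately show ?thesis by blast
    qed
  qed
qed


lemma grid_dist:
  assumes u: "u \<in> grid_verts k" and w: "w \<in> grid_verts k"
  shows "gdist (grid_verts k) (grid_adj k) u w = (\<Sum>i<k. nat \<bar>u i - w i\<bar>)"
proof (rule gdist_char[where \<delta> = "\<lambda>x. \<Sum>i<k. nat \<bar>x i - w i\<bar>", OF w _ _ _ _ u])
  fix x y assume "grid_adj k x y"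
  then obtain i where i: "i < k" "\<bar>x i - y i\<bar> = 1" "\<forall>j. j \<noteq> i \<longrightarrow> x j = y j"
    by (auto simp: grid_adj_def)
  have "(\<Sum>j<k. nat \<bar>x j - w j\<bar>) = nat \<bar>x i - w i\<bar> + (\<Sum>j\<in>{..<k} - {i}. nat \<bar>x j - w j\<bar>)"
    using i by (simp add: sum.remove)
  moreover have "(\<Sum>j<k. nat \<bar>y j - w j\<bar>) = nat \<bar>y i - w i\<bar> + (\<Sum>j\<in>{..<k} - {i}. nat \<bar>y j - w j\<bar>)"
    using i by (simp add: sum.remove)
  moreover have "(\<Sum>j\<in>{..<k} - {i}. nat \<bar>x j - w j\<bar>) = (\<Sum>j\<in>{..<k} - {i}. nat \<bar>y j - w j\<bar>)"
    using i by (intro sum.cong) auto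
  moreover have "nat \<bar>x i - w i\<bar> \<le> Suc (nat \<bar>y i - w i\<bar>)" using i(2) by arith
  ultimately show "(\<Sum>j<k. nat \<bar>x j - w j\<bar>) \<le> Suc (\<Sum>j<k. nat \<bar>y j - w j\<bar>)" by simp
next
  fix x assume x: "x \<in> grid_verts k" and ne: "(\<Sum>i<k. nat \<bar>x i - w i\<bar>) \<noteq> 0"
  then obtain i where i: "i < k" "x i \<noteq> w i" by auto
  define y where "y = x(i := x i + sgn (w i - x i))"
  have yg: "y \<in> grid_verts k" using x i by (auto simp: grid_verts_def y_def)
  have "\<bar>x i - y i\<bar> = 1" using i by (auto simp: y_def sgn_if)
  then have adj: "grid_adj k x y" using x yg i by (auto simp: grid_adj_def y_def)
  have "(\<Sum>j<k. nat \<bar>x j - w j\<bar>) = nat \<bar>x i - w i\<bar> + (\<Sum>j\<in>{..<k} - {i}. nat \<bar>x j - w j\<bar>)"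
    using i by (simp add: sum.remove)
  moreover have "(\<Sum>j<k. nat \<bar>y j - w j\<bar>) = nat \<bar>y i - w i\<bar> + (\<Sum>j\<in>{..<k} - {i}. nat \<bar>y j - w j\<bar>)"
    using i by (simp add: sum.remove)
  moreover have "(\<Sum>j\<in>{..<k} - {i}. nat \<bar>x j - w j\<bar>) = (\<Sum>j\<in>{..<k} - {i}. nat \<bar>y j - w j\<bar>)"
    by (intro sum.cong) (auto simp: y_def)
  moreover have "nat \<bar>x i - w i\<bar> = Suc (nat \<bar>y i - w i\<bar>)" using i by (auto simp: y_def sgn_if)
  ultimately show "\<exists>y\<in>grid_verts k. grid_adj k x y \<and> (\<Sum>j<k. nat \<bar>x j - w j\<bar>) = Suc (\<Sum>j<k. nat \<bar>y j - w j\<bar>)"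
    using yg adj by (intro bexI[of _ y]) auto
next
  fix x assume x: "x \<in> grid_verts k" and z: "(\<Sum>i<k. nat \<bar>x i - w i\<bar>) = 0"
  show "x = w"
  proof
    fix i show "x i = w i"
    proof (cases "i < k")
      case True then show ?thesis using z by simp
    next
      case False then show ?thesis using x w by (auto simp: grid_verts_def)
    qed
  qed
qed simp


context mg
begin

lemma itv_tr3: assumes "u \<in> V" "w \<in> V" "a \<in> Itv u w" "b \<in> Itv u a" shows "b \<in> Itv u w"
proof -
  have V: "a \<in> V" using assms itv_V by auto
  have "a \<in> Itv w u" "b \<in> Itv a u" using assms itv_sym V by auto
  then have "b \<in> Itv w u" using itv_tr(1)[OF assms(2,1)] by blast
  then show ?thesis using itv_sym assms by auto
qed

end

locale rooted = mg +
  fixes p q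
  assumes pV: "p \<in> V" and qV: "q \<in> V"
begin

abbreviation "I \<equiv> Itv p q"
abbreviation "P \<equiv> Spl p q"

definition le :: "'a set \<Rightarrow> 'a set \<Rightarrow> bool" where
  "le A B \<longleftrightarrow> (\<forall>x\<in>I. x \<in> B \<longrightarrow> x \<in> A)"

lemma IV: "x \<in> I \<Longrightarrow> x \<in> V" using itv_V by auto

lemma memSpl: "x \<in> I \<Longrightarrow> H \<in> P \<Longrightarrow> H \<in> Spl p x \<longleftrightarrow> x \<in> H"
  by (auto simp: Spl_def)

lemma SplsubP: "x \<in> I \<Longrightarrow> Spl p x \<subseteq> P"
  using Spl_sub1[OF pV qV] by blast

lemma finP: "finite P" using Spl_fin pV qV by blast

lemma minel:
  assumes H: "H \<in> P"
  shows "\<exists>m. m \<in> I \<and> m \<in> H \<and> Spl p m = {H'\<in>P. le H' H} \<and> (\<forall>z\<in>I. z \<in> H \<longrightarrow> d p m \<le> d p z)"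
proof -
  have "q \<in> I \<and> q \<in> H" using itv_right[OF pV qV] H by (auto simp: Spl_def)
  then obtain m where m: "m \<in> I" "m \<in> H" "\<forall>z. z \<in> I \<and> z \<in> H \<longrightarrow> d p m \<le> d p z"
    using ex_has_least_nat[of "\<lambda>z. z \<in> I \<and> z \<in> H" q "d p"] by blast
  have mV: "m \<in> V" using m IV by auto
  have HHS: "H \<in> HS" using H by (auto simp: Spl_def)
  have "Spl p m \<subseteq> {H'\<in>P. le H' H}"
  proof
    fix H' assume H': "H' \<in> Spl p m"
    have "le H' H" unfolding le_def
    proof (intro ballI impI)
      fix z assume z: "z \<in> I" "z \<in> H"
      have zV: "z \<in> V" using z IV by auto
      obtain \<mu> where mu: "\<mu> \<in> Itv p m" "\<mu> \<in> Itv m z" "\<mu> \<in> Itv z p" using med_ex pV mV zV by blast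
      have muV: "\<mu> \<in> V" using mu itv_V by auto
      have "\<mu> \<in> H"
      proof (rule ccontr)
        assume "\<mu> \<notin> H"
        then have "H \<in> Spl \<mu> m" using HHS m by (auto simp: Spl_def)
        moreover have "\<mu> \<in> Itv z m" using mu(2) itv_sym mV zV by auto
        ultimately have "H \<in> Spl z m" using Spl_sub2[OF zV mV] by blast
        then show False using z by (auto simp: Spl_def)
      qed
      moreover have "\<mu> \<in> I" using itv_tr3[OF pV qV m(1) mu(1)] .
      ultimately have "d p m \<le> d p \<mu>" using m(3) by blast
      moreover have "d p \<mu> + d \<mu> m = d p m" using mu(1) by (simp add: interval_def)
      ultimately have "d \<mu> m = 0" by simp
      then have "\<mu> = m" using d_zero muV mV by blast
      then have "m \<in> Itv p z" using mu(3) itv_sym pV zV by auto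
      then have "H' \<in> Spl p z" using Spl_sub1[OF pV zV] H' by blast
      then show "z \<in> H'" by (simp add: Spl_def)
    qed
    then show "H' \<in> {H'\<in>P. le H' H}" using SplsubP[OF m(1)] H' by auto
  qed
  moreover have "{H'\<in>P. le H' H} \<subseteq> Spl p m"
  proof
    fix H' assume "H' \<in> {H'\<in>P. le H' H}"
    then have "H' \<in> P" "m \<in> H'" using m unfolding le_def by auto
    then show "H' \<in> Spl p m" using memSpl m(1) by blast
  qed
  ultimately show ?thesis using m by blast
qed

lemma le_antisym:
  assumes H1: "H1 \<in> P" and H2: "H2 \<in> P" and l: "le H1 H2" "le H2 H1"
  shows "H1 = H2"
proof -
  obtain m where m: "m \<in> I" "m \<in> H1" "Spl p m = {H'\<in>P. le H' H1}" "\<forall>z\<in>I. z \<in> H1 \<longrightarrow> d p m \<le> d p z"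
    using minel[OF H1] by blast
  have mV: "m \<in> V" using m IV by auto
  have "p \<notin> H1" using H1 by (auto simp: Spl_def)
  then have "m \<noteq> p" using m by auto
  then have "d m p \<noteq> 0" using d_zero mV pV by blast
  then obtain n where n: "d m p = Suc n" by (cases "d m p") auto
  then obtain m' where m': "E m m'" "d m' p = n" using d_step mV pV by blast
  have m'V: "m' \<in> V" using m' EV by auto
  have dm: "d p m = Suc n" "d p m' = n" "d m' m = 1"
    using n m' d_sym mV pV m'V d_adj Esym by auto
  have m'I1: "m' \<in> Itv p m" using dm m'V by (simp add: interval_def)
  have m'I: "m' \<in> I" using itv_tr3[OF pV qV m(1) m'I1] .
  have dec: "Spl p m = Spl p m' \<union> Spl m' m" using Spl_decomp(1)[OF pV mV m'I1] .
  have c1: "card (Spl m' m) = 1" using Spl_card[OF m'V mV] dm by simp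
  have refl1: "le H1 H1" by (simp add: le_def)
  have in1: "H1 \<in> Spl p m" using m(3) refl1 H1 by auto
  have in2: "H2 \<in> Spl p m" using m(3) l(2) H2 by auto
  have "m' \<notin> H1" using m(4) m'I dm by force
  then have "m' \<notin> H2" using l(1) m'I unfolding le_def by blast
  have "H1 \<in> Spl m' m" using in1 dec \<open>m' \<notin> H1\<close> by (auto simp: Spl_def)
  moreover have "H2 \<in> Spl m' m" using in2 dec \<open>m' \<notin> H2\<close> by (auto simp: Spl_def)
  ultimately show ?thesis using c1 by (metis card_1_singletonE singletonD)
qed

lemma po: "porder le P"
  unfolding porder_def using le_antisym by (auto simp: le_def)

lemma realize_down:
  assumes S: "S \<subseteq> P" and dc: "\<forall>B\<in>S. \<forall>A\<in>P. le A B \<longrightarrow> A \<in> S"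
  shows "\<exists>z\<in>I. Spl p z = S"
proof -
  define mm where "mm H = (SOME m. m \<in> I \<and> m \<in> H \<and> Spl p m = {H'\<in>P. le H' H} \<and> (\<forall>z\<in>I. z \<in> H \<longrightarrow> d p m \<le> d p z))" for H
  have mm: "mm H \<in> I \<and> Spl p (mm H) = {H'\<in>P. le H' H}" if "H \<in> P" for H
  proof -
    have "\<exists>m. m \<in> I \<and> m \<in> H \<and> Spl p m = {H'\<in>P. le H' H} \<and> (\<forall>z\<in>I. z \<in> H \<longrightarrow> d p m \<le> d p z)"
      using minel[OF that] .
    then have "mm H \<in> I \<and> mm H \<in> H \<and> Spl p (mm H) = {H'\<in>P. le H' H} \<and> (\<forall>z\<in>I. z \<in> H \<longrightarrow> d p (mm H) \<le> d p z)"
      unfolding mm_def by (rule someI_ex)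
    then show ?thesis by blast
  qed
  have fin: "finite S" using S finP finite_subset by blast
  obtain z where z: "z \<in> I" "Spl p z = (\<Union>H\<in>S. Spl p (mm H))"
    using realize[OF pV qV fin, of mm] mm S by blast
  have "(\<Union>H\<in>S. Spl p (mm H)) = S"
  proof
    show "(\<Union>H\<in>S. Spl p (mm H)) \<subseteq> S" using mm S dc by blast
    show "S \<subseteq> (\<Union>H\<in>S. Spl p (mm H))"
    proof
      fix H assume "H \<in> S"
      then have "H \<in> Spl p (mm H)" using mm S by (auto simp: le_def)
      then show "H \<in> (\<Union>H\<in>S. Spl p (mm H))" using \<open>H \<in> S\<close> by blast
    qed
  qed
  then show ?thesis using z by auto
qed

lemma antichain_bound:
  assumes hk: "\<forall>m. has_cube I (induced_adj E I) m \<longrightarrow> m \<le> k"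
    and A: "A \<subseteq> P" "antichain le A"
  shows "card A \<le> k"
proof -
  have anti: "\<And>x y. x \<in> A \<Longrightarrow> y \<in> A \<Longrightarrow> le x y \<Longrightarrow> x = y" using A unfolding antichain_def by blast
  have letr: "\<And>x y z. le x y \<Longrightarrow> le y z \<Longrightarrow> le x z" unfolding le_def by blast
  define S0 where "S0 = {H'\<in>P. \<exists>H\<in>A. le H' H} - A"
  have S0P: "S0 \<subseteq> P" using S0_def by auto
  have AS0: "A \<inter> S0 = {}" using S0_def by auto
  have dc0: "\<forall>B\<in>S0. \<forall>A'\<in>P. le A' B \<longrightarrow> A' \<in> S0"
  proof (intro ballI impI)
    fix B A' assume B: "B \<in> S0" and A': "A' \<in> P" "le A' B"
    then obtain H where H: "H \<in> A" "le B H" "B \<notin> A" "B \<in> P" using S0_def by auto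
    have "le A' H" using letr A'(2) H(2) .
    moreover have "A' \<notin> A"
    proof
      assume "A' \<in> A"
      then have "A' = H" using anti H(1) \<open>le A' H\<close> by blast
      then have "B = H" using le_antisym[OF H(4)] A H A' by auto
      then show False using H by simp
    qed
    ultimately show "A' \<in> S0" using S0_def A' H by auto
  qed
  obtain v where v: "v \<in> I" "Spl p v = S0" using realize_down[OF S0P dc0] by blast
  have yex: "\<exists>y\<in>I. Spl p y = insert H S0" if H: "H \<in> A" for H
  proof (rule realize_down)
    show "insert H S0 \<subseteq> P" using H A S0P by auto
    show "\<forall>B\<in>insert H S0. \<forall>A'\<in>P. le A' B \<longrightarrow> A' \<in> insert H S0"
    proof (intro ballI impI)
      fix B A' assume B: "B \<in> insert H S0" and A': "A' \<in> P" "le A' B"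
      show "A' \<in> insert H S0"
      proof (cases "B = H")
        case True
        show ?thesis
        proof (cases "A' \<in> A")
          case True then show ?thesis using anti H A' \<open>B = H\<close> by blast
        next
          case False then show ?thesis using S0_def A' H \<open>B = H\<close> by auto
        qed
      next
        case False then show ?thesis using dc0 B A' by auto
      qed
    qed
  qed
  define yy where "yy H = (SOME y. y \<in> I \<and> Spl p y = insert H S0)" for H
  have yy: "yy H \<in> I \<and> Spl p (yy H) = insert H S0" if "H \<in> A" for H
    using yex[OF that] unfolding yy_def by (metis (mono_tags, lifting) someI_ex)
  have finA: "finite A" using A finP finite_subset by blast
  obtain e where e: "bij_betw e {0..<card A} A" using ex_bij_betw_nat_finite[OF finA] by blast
  define r where "r = card A"
  have e': "bij_betw e {..<r} A" using e r_def by (simp add: atLeast0LessThan)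
  define y where "y i = yy (e i)" for i
  have eA: "e i \<in> A" if "i < r" for i using e' that bij_betwE by blast
  have vV: "v \<in> V" using v IV by auto
  have yI: "y i \<in> I" "Spl p (y i) = insert (e i) S0" if "i < r" for i
    using yy[OF eA[OF that]] y_def by auto
  have yV: "y i \<in> V" if "i < r" for i using yI[OF that] IV by auto
  have eS0: "e i \<notin> S0" if "i < r" for i using eA[OF that] AS0 by auto
  have inj: "inj_on y {..<r}"
  proof
    fix i j assume ij: "i \<in> {..<r}" "j \<in> {..<r}" "y i = y j"
    then have "insert (e i) S0 = insert (e j) S0" using yI by (metis lessThan_iff)
    then have "e i = e j" using eS0 ij by (metis insertE insertI1 lessThan_iff)
    then show "i = j" using e' ij unfolding bij_betw_def by (meson inj_on_contraD)
  qed
  have yy2: "E v (y i) \<and> y i \<in> Itv v q" if i: "i < r" for i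
  proof -
    have eP: "e i \<in> P" using eA[OF i] A by auto
    have "(S0 - insert (e i) S0) \<union> (insert (e i) S0 - S0) = {e i}" using eS0[OF i] by auto
    then have d1: "d v (y i) = 1" using Spl_dist[OF pV vV yV[OF i]] v yI[OF i] by simp
    have "(S0 - P) \<union> (P - S0) = P - S0" using S0P by auto
    then have d2: "d v q = card (P - S0)" using Spl_dist[OF pV vV qV] v by simp
    have "(insert (e i) S0 - P) \<union> (P - insert (e i) S0) = (P - S0) - {e i}" using S0P eP by auto
    then have d3: "d (y i) q = card ((P - S0) - {e i})" using Spl_dist[OF pV yV[OF i] qV] yI[OF i] by simp
    have "e i \<in> P - S0" using eP eS0[OF i] by auto
    moreover have "finite (P - S0)" using finP by auto
    ultimately have "card ((P - S0) - {e i}) + 1 = card (P - S0)"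
      by (metis One_nat_def Suc_pred card_Diff_singleton card_gt_0_iff empty_iff add.commute plus_1_eq_Suc)
    then have "y i \<in> Itv v q" using d1 d2 d3 yV[OF i] by (simp add: interval_def)
    moreover have "E v (y i)" using d_one[OF vV yV[OF i] d1] .
    ultimately show ?thesis by simp
  qed
  obtain f where f: "cube_subgraph_map V E r f" "f ` cube_verts r \<subseteq> Itv v q"
    using cube_lemma[OF vV qV inj] yy2 by blast
  have sub: "Itv v q \<subseteq> I" using itv_tr(1)[OF pV qV v(1)] by blast
  have "cube_subgraph_map I (induced_adj E I) r f"
    using f sub unfolding cube_subgraph_map_def induced_adj_def by blast
  then have "has_cube I (induced_adj E I) r" by (auto simp: has_cube_def)
  then show ?thesis using hk r_def by blast
qed

end

context rooted
begin

lemma ind_dist: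
  assumes a: "a \<in> I" and z: "z \<in> I"
  shows "gdist I (induced_adj E I) a z = d a z"
proof (rule gdist_char[where \<delta> = "\<lambda>x. d x z", OF z _ _ _ _ a])
  fix x y assume "induced_adj E I x y"
  then show "d x z \<le> Suc (d y z)" using d_edge z IV by (auto simp: induced_adj_def)
next
  fix x assume x: "x \<in> I" and ne: "d x z \<noteq> 0"
  have xV: "x \<in> V" and zV: "z \<in> V" using x z IV by auto
  obtain m where m: "m \<in> Itv p x" "m \<in> Itv x z" "m \<in> Itv z p" using med_ex pV xV zV by blast
  have mV: "m \<in> V" using m itv_V by auto
  show "\<exists>y\<in>I. induced_adj E I x y \<and> d x z = Suc (d y z)"
  proof (cases "m = x")
    case False
    then have "d x m \<noteq> 0" using d_zero xV mV by metis
    then obtain n where n: "d x m = Suc n" by (cases "d x m") auto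
    then obtain y where y: "E x y" "d y m = n" using d_step xV mV by blast
    have yV: "y \<in> V" using y EV by auto
    have "d x y = 1" using d_adj y by simp
    then have y1: "y \<in> Itv x m" using y n yV by (simp add: interval_def)
    have y2: "y \<in> Itv x z" using itv_tr3[OF xV zV m(2) y1] .
    have "y \<in> Itv m x" using y1 itv_sym xV mV by auto
    then have "y \<in> Itv p x" using itv_tr(1)[OF pV xV m(1)] by blast
    then have yI: "y \<in> I" using itv_tr3[OF pV qV x] by blast
    have "d x y + d y z = d x z" using y2 by (simp add: interval_def)
    then show ?thesis using yI y x \<open>d x y = 1\<close> by (intro bexI[of _ y]) (auto simp: induced_adj_def)
  next
    case True
    then have xpz: "x \<in> Itv p z" using m(3) itv_sym pV zV by auto
    obtain n where n: "d x z = Suc n" using ne by (cases "d x z") auto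
    then obtain y where y: "E x y" "d y z = n" using d_step xV zV by blast
    have yV: "y \<in> V" using y EV by auto
    have "d x y = 1" using d_adj y by simp
    then have y1: "y \<in> Itv x z" using y n yV by (simp add: interval_def)
    then have "y \<in> Itv p z" using itv_tr(1)[OF pV zV xpz] by blast
    then have yI: "y \<in> I" using itv_tr3[OF pV qV z] by blast
    then show ?thesis using y x n by (intro bexI[of _ y]) (auto simp: induced_adj_def)
  qed
next
  fix x assume "x \<in> I" "d x z = 0" then show "x = z" using d_zero z IV by blast
next
  show "d z z = 0" using z IV by simp
qed

lemma embed:
  assumes hk: "\<forall>m. has_cube I (induced_adj E I) m \<longrightarrow> m \<le> k"
  shows "\<exists>g. isometric_embedding I (induced_adj E I) (grid_verts k) (grid_adj k) g"
proof -
  have bound: "\<forall>A\<subseteq>P. antichain le A \<longrightarrow> card A \<le> k" using antichain_bound[OF hk] by blast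
  obtain col where col: "\<forall>x\<in>P. col x < k" "\<forall>x\<in>P. \<forall>y\<in>P. col x = col y \<longrightarrow> le x y \<or> le y x"
    using dilworth[OF finP po bound] by blast
  define g where "g x = (\<lambda>i. if i < k then int (card {H\<in>Spl p x. col H = i}) else 0)" for x
  have gG: "g ` I \<subseteq> grid_verts k" by (auto simp: g_def grid_verts_def)
  have key: "(\<Sum>i<k. nat \<bar>g a i - g b i\<bar>) = d a b" if ab: "a \<in> I" "b \<in> I" for a b
  proof -
    define X where "X = Spl p a"
    define Y where "Y = Spl p b"
    define D where "D = (X - Y) \<union> (Y - X)"
    have XP: "X \<subseteq> P" "Y \<subseteq> P" using SplsubP ab X_def Y_def by auto
    have fin: "finite X" "finite Y" using XP finP finite_subset by auto
    have aV: "a \<in> V" "b \<in> V" using ab IV by auto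
    have each: "nat \<bar>g a i - g b i\<bar> = card {H\<in>D. col H = i}" if i: "i < k" for i
    proof -
      define Xi where "Xi = {H\<in>X. col H = i}"
      define Yi where "Yi = {H\<in>Y. col H = i}"
      have fi: "finite Xi" "finite Yi" using fin Xi_def Yi_def by auto
      have nest: "Xi \<subseteq> Yi \<or> Yi \<subseteq> Xi"
      proof (rule ccontr)
        assume "\<not> (Xi \<subseteq> Yi \<or> Yi \<subseteq> Xi)"
        then obtain h1 h2 where h: "h1 \<in> Xi" "h1 \<notin> Yi" "h2 \<in> Yi" "h2 \<notin> Xi" by blast
        have hP: "h1 \<in> P" "h2 \<in> P" using h XP Xi_def Yi_def by auto
        have "col h1 = col h2" using h Xi_def Yi_def by auto
        then have "le h1 h2 \<or> le h2 h1" using col(2) hP by blast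
        then show False
        proof
          assume "le h1 h2"
          have "b \<in> h2" using memSpl[OF ab(2) hP(2)] h Yi_def Y_def by auto
          then have "b \<in> h1" using \<open>le h1 h2\<close> ab unfolding le_def by blast
          then have "h1 \<in> Y" using memSpl[OF ab(2) hP(1)] Y_def by auto
          then show False using h Xi_def Yi_def by auto
        next
          assume "le h2 h1"
          have "a \<in> h1" using memSpl[OF ab(1) hP(1)] h Xi_def X_def by auto
          then have "a \<in> h2" using \<open>le h2 h1\<close> ab unfolding le_def by blast
          then have "h2 \<in> X" using memSpl[OF ab(1) hP(2)] X_def by auto
          then show False using h Xi_def Yi_def by auto
        qed
      qed
      have DI: "{H\<in>D. col H = i} = (Xi - Yi) \<union> (Yi - Xi)" using D_def Xi_def Yi_def by auto
      have ga: "g a i = int (card Xi)" "g b i = int (card Yi)" using i by (auto simp: g_def Xi_def Yi_def X_def Y_def)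
      show ?thesis
      proof (cases "Xi \<subseteq> Yi")
        case True
        then have "{H\<in>D. col H = i} = Yi - Xi" using DI by auto
        moreover have "card (Yi - Xi) = card Yi - card Xi" using card_Diff_subset[OF fi(1) True] .
        moreover have "card Xi \<le> card Yi" using card_mono[OF fi(2) True] .
        ultimately show ?thesis using ga by simp
      next
        case False
        then have S: "Yi \<subseteq> Xi" using nest by blast
        then have "{H\<in>D. col H = i} = Xi - Yi" using DI by auto
        moreover have "card (Xi - Yi) = card Xi - card Yi" using card_Diff_subset[OF fi(2) S] .
        moreover have "card Yi \<le> card Xi" using card_mono[OF fi(1) S] .
        ultimately show ?thesis using ga by simp
      qed
    qed
    have DP: "D \<subseteq> P" using XP D_def by auto
    have Dun: "D = (\<Union>i\<in>{..<k}. {H\<in>D. col H = i})" using DP col(1) by auto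
    have finD: "finite D" using DP finP finite_subset by blast
    have "card D = (\<Sum>i<k. card {H\<in>D. col H = i})"
      by (subst Dun, rule card_UN_disjoint) (use finD in auto)
    moreover have "d a b = card D" using Spl_dist[OF pV aV] D_def X_def Y_def by simp
    ultimately show ?thesis using each by simp
  qed
  have "isometric_embedding I (induced_adj E I) (grid_verts k) (grid_adj k) g"
    unfolding isometric_embedding_def
  proof (intro conjI ballI)
    show "g ` I \<subseteq> grid_verts k" using gG .
    fix a b assume ab: "a \<in> I" "b \<in> I"
    have "gdist (grid_verts k) (grid_adj k) (g a) (g b) = (\<Sum>i<k. nat \<bar>g a i - g b i\<bar>)"
      using grid_dist gG ab by blast
    then show "gdist (grid_verts k) (grid_adj k) (g a) (g b) = gdist I (induced_adj E I) a b"
      using key[OF ab] ind_dist[OF ab] by simp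
  qed
  then show ?thesis by blast
qed

end

theorem mainTheorem6:
  fixes V :: "'a set" and E :: "'a \<Rightarrow> 'a \<Rightarrow> bool" and p q :: 'a and k :: nat
  assumes "median_graph V E"
    and "p \<in> V" and "q \<in> V"
    and "has_cube (interval V E p q) (induced_adj E (interval V E p q)) k"
    and "\<forall>m. has_cube (interval V E p q) (induced_adj E (interval V E p q)) m \<longrightarrow> m \<le> k"
  shows "(\<forall>v m y. v \<in> interval V E p q \<and> inj_on y {..<m} \<and>
            (\<forall>i<m. E v (y i) \<and> y i \<in> interval V E v q) \<longrightarrow>
            (\<exists>f. cube_subgraph_map V E m f \<and> f ` cube_verts m \<subseteq> interval V E v q \<and>
                 v \<in> f ` cube_verts m \<and> (\<forall>i<m. y i \<in> f ` cube_verts m)))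
       \<and> (\<exists>g. isometric_embedding (interval V E p q) (induced_adj E (interval V E p q))
                 (grid_verts k) (grid_adj k) g)"
proof -
  interpret rooted V E p q
    using assms(1-3) by (unfold_locales) auto
  have 1: "\<forall>v m y. v \<in> interval V E p q \<and> inj_on y {..<m} \<and>
            (\<forall>i<m. E v (y i) \<and> y i \<in> interval V E v q) \<longrightarrow>
            (\<exists>f. cube_subgraph_map V E m f \<and> f ` cube_verts m \<subseteq> interval V E v q \<and>
                 v \<in> f ` cube_verts m \<and> (\<forall>i<m. y i \<in> f ` cube_verts m))"
  proof (intro allI impI)
    fix v and m :: nat and y :: "nat \<Rightarrow> 'a"
    assume h: "v \<in> interval V E p q \<and> inj_on y {..<m} \<and> (\<forall>i<m. E v (y i) \<and> y i \<in> interval V E v q)"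
    then have "v \<in> V" using IV by auto
    then show "\<exists>f. cube_subgraph_map V E m f \<and> f ` cube_verts m \<subseteq> interval V E v q \<and>
                 v \<in> f ` cube_verts m \<and> (\<forall>i<m. y i \<in> f ` cube_verts m)"
      using cube_lemma[OF _ qV, of v y m] h by blast
  qed
  show ?thesis using 1 embed[OF assms(5)] by blast
qed


end
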